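(* Let $G$ and $H$ be finitely generated groups whose growth functions $g_G(n)$ and $g_H(n)$ are polynomial and exponential, respectively. Then for any polynomial $t(n)$, $\mathfrak{L}(H)\not\subseteq \mathfrak{L}(G)^w_{t(n)}$.
   Context: For a group $G$ with identity $e$, a $G$-automaton is a tuple $(Q,\Sigma,G,\delta,q_0,Q_a)$ where $Q$ is a finite set of states, $\Sigma$ a finite input alphabet, $q_0\in Q$ the initial state, $Q_a\subseteq Q$ the accepting states, and $\delta$ assigns to each $(q,\sigma)\in Q\times(\Sigma\cup\{\varepsilon\})$ a finite set of pairs $(q',m)\in Q\times G$. The register holds an element of $G$, initially $e$; using a transition $(q',m)\in\delta(q,\sigma)$ (one step) the automaton reads $\sigma$ (or nothing), moves to $q'$ and replaces the register content $x$ by $xm$. A word is accepted if some computation reads it entirely and ends in an accepting state with register equal to $e$. $\mathfrak{L}(G)$ is the class of languages recognized by $G$-automata. A $G$-automaton recognizing $\mathtt{L}$ is weakly $t(n)$ time-bounded if every $x\in\mathtt{L}$ with $|x|=n$ has an accepting computation of at most $t(n)$ steps; $\mathfrak{L}(G)^w_{t(n)}$ is the class of languages recognized by such automata. The growth function $g_G(n)$ of $G$ with respect to a finite generating set $X$ is the number of elements of $G$ representable by words of length at most $n$ over $X\cup X^{-1}$. *)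

theory Defs
  imports "HOL-Algebra.Generated_Groups" "HOL-Computational_Algebra.Polynomial"
begin

definition fin_gen_set :: "('g,'b) monoid_scheme \<Rightarrow> 'g set \<Rightarrow> bool" where
  "fin_gen_set G X \<longleftrightarrow> finite X \<and> X \<subseteq> carrier G \<and> generate G X = carrier G"

definition eval_word :: "('g,'b) monoid_scheme \<Rightarrow> 'g list \<Rightarrow> 'g" where
  "eval_word G ws = foldr (\<lambda>a b. a \<otimes>\<^bsub>G\<^esub> b) ws \<one>\<^bsub>G\<^esub>"

definition growth :: "('g,'b) monoid_scheme \<Rightarrow> 'g set \<Rightarrow> nat \<Rightarrow> nat" where
  "growth G X n = card {x. \<exists>ws. length ws \<le> n \<and> set ws \<subseteq> X \<union> m_inv G ` X \<and> x = eval_word G ws}"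

definition polynomial_growth :: "(nat \<Rightarrow> nat) \<Rightarrow> bool" where
  "polynomial_growth g \<longleftrightarrow> (\<exists>C d. \<forall>n. real (g n) \<le> C * (real n + 1) ^ d)"

definition exponential_growth :: "(nat \<Rightarrow> nat) \<Rightarrow> bool" where
  "exponential_growth g \<longleftrightarrow> (\<exists>c a. c > 0 \<and> a > (1::real) \<and> (\<forall>n. c * a ^ n \<le> real (g n)))"

text \<open>States and input letters are taken to be natural numbers (any finite
  set embeds into nat). A transition function maps a state and either a letter (Some a)
  or the empty word (None) to a finite set of pairs (next state, group element).\<close>

definition G_automaton :: "('g,'b) monoid_scheme \<Rightarrow> nat set \<Rightarrow> nat set
    \<Rightarrow> (nat \<Rightarrow> nat option \<Rightarrow> (nat \<times> 'g) set) \<Rightarrow> nat \<Rightarrow> nat set \<Rightarrow> bool" where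
  "G_automaton G Q \<Sigma> \<delta> q0 Qa \<longleftrightarrow>
     finite Q \<and> finite \<Sigma> \<and> q0 \<in> Q \<and> Qa \<subseteq> Q \<and>
     (\<forall>q s. finite (\<delta> q s) \<and> \<delta> q s \<subseteq> Q \<times> carrier G) \<and>
     (\<forall>q s. \<delta> q s \<noteq> {} \<longrightarrow> q \<in> Q \<and> (case s of None \<Rightarrow> True | Some a \<Rightarrow> a \<in> \<Sigma>))"

text \<open>comp G \<delta> q x w n q' x': starting in state q with register x, the automaton can read
  the word w entirely in exactly n steps, ending in state q' with register x'.\<close>
inductive comp :: "('g,'b) monoid_scheme \<Rightarrow> (nat \<Rightarrow> nat option \<Rightarrow> (nat \<times> 'g) set)
    \<Rightarrow> nat \<Rightarrow> 'g \<Rightarrow> nat list \<Rightarrow> nat \<Rightarrow> nat \<Rightarrow> 'g \<Rightarrow> bool"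
  for G \<delta> where
  stop: "comp G \<delta> q x [] 0 q x"
| eps: "(q1, m) \<in> \<delta> q None \<Longrightarrow> comp G \<delta> q1 (x \<otimes>\<^bsub>G\<^esub> m) w n q' x'
          \<Longrightarrow> comp G \<delta> q x w (Suc n) q' x'"
| read: "(q1, m) \<in> \<delta> q (Some a) \<Longrightarrow> comp G \<delta> q1 (x \<otimes>\<^bsub>G\<^esub> m) w n q' x'
          \<Longrightarrow> comp G \<delta> q x (a # w) (Suc n) q' x'"

definition accepts_in :: "('g,'b) monoid_scheme \<Rightarrow> (nat \<Rightarrow> nat option \<Rightarrow> (nat \<times> 'g) set)
    \<Rightarrow> nat \<Rightarrow> nat set \<Rightarrow> nat list \<Rightarrow> nat \<Rightarrow> bool" where
  "accepts_in G \<delta> q0 Qa w n \<longleftrightarrow> (\<exists>q. q \<in> Qa \<and> comp G \<delta> q0 \<one>\<^bsub>G\<^esub> w n q \<one>\<^bsub>G\<^esub>)"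

definition aut_lang :: "('g,'b) monoid_scheme \<Rightarrow> (nat \<Rightarrow> nat option \<Rightarrow> (nat \<times> 'g) set)
    \<Rightarrow> nat \<Rightarrow> nat set \<Rightarrow> nat list set" where
  "aut_lang G \<delta> q0 Qa = {w. \<exists>n. accepts_in G \<delta> q0 Qa w n}"

definition LG :: "('g,'b) monoid_scheme \<Rightarrow> nat list set set" where
  "LG G = {L. \<exists>Q \<Sigma> \<delta> q0 Qa. G_automaton G Q \<Sigma> \<delta> q0 Qa \<and> L = aut_lang G \<delta> q0 Qa}"

definition LGw :: "('g,'b) monoid_scheme \<Rightarrow> (nat \<Rightarrow> real) \<Rightarrow> nat list set set" where
  "LGw G t = {L. \<exists>Q \<Sigma> \<delta> q0 Qa. G_automaton G Q \<Sigma> \<delta> q0 Qa \<and> L = aut_lang G \<delta> q0 Qa \<and>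
      (\<forall>w\<in>L. \<exists>n. real n \<le> t (length w) \<and> accepts_in G \<delta> q0 Qa w n)}"

end

theory Submission
  imports Defs "HOL-Real_Asymp.Real_Asymp"
begin

lemma poly_exp_exists:
  fixes a c E :: real assumes a: "a > 1" and c: "c > 0"
  shows "\<exists>n::nat. E * (real n + 1)^D < c * a^n"
proof -
  have lim: "((\<lambda>n::nat. (real n+1)^D / a^n) \<longlongrightarrow> 0) at_top" using a by real_asymp
  have pos: "c / (\<bar>E\<bar>+1) > 0" using c by simp
  have "eventually (\<lambda>n. (real n+1)^D / a^n < c / (\<bar>E\<bar>+1)) at_top"
    using order_tendstoD(2)[OF lim pos] .
  then obtain n where n: "(real n+1)^D / a^n < c/(\<bar>E\<bar>+1)"
    by (meson eventually_sequentially le_refl)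
  have apos: "a^n > 0" using a by simp
  have "(real n+1)^D < c/(\<bar>E\<bar>+1) * a^n" using n apos by (simp add: divide_less_eq)
  then have "(\<bar>E\<bar>+1) * (real n+1)^D < c * a^n"
    by (smt (verit, ccfv_SIG) mult.commute pos_less_divide_eq times_divide_eq_left)
  moreover have "E * (real n+1)^D \<le> (\<bar>E\<bar>+1) * (real n+1)^D"
    by (intro mult_right_mono) auto
  ultimately show ?thesis by (intro exI[of _ n]) linarith
qed

lemma poly_bound:
  fixes p :: "real poly"
  shows "\<exists>A e. A \<ge> 0 \<and> (\<forall>x\<ge>0. poly p x \<le> A * (x+1)^e)"
proof (intro exI conjI allI impI)
  show "0 \<le> (\<Sum>i\<le>degree p. \<bar>coeff p i\<bar>)" by (simp add: sum_nonneg)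
  fix x :: real assume x: "x \<ge> 0"
  have "poly p x = (\<Sum>i\<le>degree p. coeff p i * x^i)" by (simp add: poly_altdef)
  also have "\<dots> \<le> (\<Sum>i\<le>degree p. \<bar>coeff p i\<bar> * (x+1)^degree p)"
  proof (rule sum_mono)
    fix i assume i: "i \<in> {..degree p}"
    have "x^i \<le> (x+1)^i" using x by (intro power_mono) auto
    also have "\<dots> \<le> (x+1)^degree p" using x i by (intro power_increasing) auto
    finally have "x^i \<le> (x+1)^degree p" .
    then have "\<bar>coeff p i\<bar> * x^i \<le> \<bar>coeff p i\<bar> * (x+1)^degree p"
      by (intro mult_left_mono) auto
    moreover have "coeff p i * x^i \<le> \<bar>coeff p i\<bar> * x^i"
      using x by (intro mult_right_mono) auto
    ultimately show "coeff p i * x^i \<le> \<bar>coeff p i\<bar> * (x+1)^degree p" by linarith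
  qed
  also have "\<dots> = (\<Sum>i\<le>degree p. \<bar>coeff p i\<bar>) * (x+1)^degree p"
    by (simp add: sum_distrib_right)
  finally show "poly p x \<le> (\<Sum>i\<le>degree p. \<bar>coeff p i\<bar>) * (x+1)^degree p" .
qed

section \<open>Words\<close>

lemma eval_word_Nil[simp]: "eval_word G [] = \<one>\<^bsub>G\<^esub>"
  by (simp add: eval_word_def)

lemma eval_word_Cons[simp]: "eval_word G (a # ws) = a \<otimes>\<^bsub>G\<^esub> eval_word G ws"
  by (simp add: eval_word_def)

lemma eval_word_closed:
  assumes "monoid G" "set ws \<subseteq> carrier G"
  shows "eval_word G ws \<in> carrier G"
  using assms(2) by (induction ws) (auto simp: monoid.m_closed[OF assms(1)] monoid.one_closed[OF assms(1)])

lemma eval_word_append: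
  assumes "monoid G" "set xs \<subseteq> carrier G" "set ys \<subseteq> carrier G"
  shows "eval_word G (xs @ ys) = eval_word G xs \<otimes>\<^bsub>G\<^esub> eval_word G ys"
  using assms(2)
proof (induction xs)
  case Nil
  then show ?case using eval_word_closed[OF assms(1,3)] monoid.l_one[OF assms(1)] by simp
next
  case (Cons a xs)
  then show ?case using eval_word_closed[OF assms(1)] assms(3)
    by (simp add: monoid.m_assoc[OF assms(1)])
qed

definition bs :: "('g,'b) monoid_scheme \<Rightarrow> 'g set \<Rightarrow> nat \<Rightarrow> 'g set" where
  "bs G X N = {x. \<exists>ws. length ws \<le> N \<and> set ws \<subseteq> X \<union> m_inv G ` X \<and> x = eval_word G ws}"

lemma growth_bs: "growth G X N = card (bs G X N)"
  by (simp add: growth_def bs_def)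

lemma bs_mono: "N1 \<le> N2 \<Longrightarrow> bs G X N1 \<subseteq> bs G X N2"
  unfolding bs_def by (blast intro: le_trans)

lemma bs_finite:
  assumes "finite X" shows "finite (bs G X N)"
proof -
  have "bs G X N = eval_word G ` {ws. set ws \<subseteq> X \<union> m_inv G ` X \<and> length ws \<le> N}"
    unfolding bs_def by auto
  moreover have "finite {ws. set ws \<subseteq> X \<union> m_inv G ` X \<and> length ws \<le> N}"
    using assms by (intro finite_lists_length_le) auto
  ultimately show ?thesis by simp
qed

lemma gen_carrier:
  assumes "group G" "X \<subseteq> carrier G"
  shows "X \<union> m_inv G ` X \<subseteq> carrier G"
  using assms group.inv_closed by fastforce

lemma bs_carrier:
  assumes "group G" "X \<subseteq> carrier G"
  shows "bs G X N \<subseteq> carrier G"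
  unfolding bs_def using eval_word_closed[OF group.is_monoid[OF assms(1)]] gen_carrier[OF assms]
  by blast

lemma bs_mult:
  assumes "group G" "X \<subseteq> carrier G" "x \<in> bs G X N1" "y \<in> bs G X N2"
  shows "x \<otimes>\<^bsub>G\<^esub> y \<in> bs G X (N1 + N2)"
proof -
  obtain xs where xs: "length xs \<le> N1" "set xs \<subseteq> X \<union> m_inv G ` X" "x = eval_word G xs"
    using assms(3) unfolding bs_def by blast
  obtain ys where ys: "length ys \<le> N2" "set ys \<subseteq> X \<union> m_inv G ` X" "y = eval_word G ys"
    using assms(4) unfolding bs_def by blast
  have "set xs \<subseteq> carrier G" "set ys \<subseteq> carrier G" using xs(2) ys(2) gen_carrier[OF assms(1,2)] by blast+
  then have "x \<otimes>\<^bsub>G\<^esub> y = eval_word G (xs @ ys)"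
    using eval_word_append[OF group.is_monoid[OF assms(1)]] xs ys by simp
  then show ?thesis unfolding bs_def using xs ys by (intro CollectI exI[of _ "xs @ ys"]) auto
qed

lemma generate_bs:
  assumes "group G" "X \<subseteq> carrier G" "x \<in> generate G X"
  shows "\<exists>N. x \<in> bs G X N"
  using assms(3)
proof (induction rule: generate.induct)
  case one
  then show ?case unfolding bs_def by (intro exI[of _ 0] CollectI exI[of _ "[]"]) auto
next
  case (incl h)
  have "h \<in> carrier G" using incl assms by auto
  then show ?case unfolding bs_def using incl assms(1)
    by (intro exI[of _ 1] CollectI exI[of _ "[h]"]) (auto simp: group.is_monoid monoid.r_one)
next
  case (inv h)
  have "inv\<^bsub>G\<^esub> h \<in> carrier G" using inv assms by auto
  then show ?case unfolding bs_def using inv assms(1)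
    by (intro exI[of _ 1] CollectI exI[of _ "[inv\<^bsub>G\<^esub> h]"]) (auto simp: group.is_monoid monoid.r_one)
next
  case (eng h1 h2)
  then show ?case using bs_mult[OF assms(1,2)] by blast
qed

section \<open>Computations\<close>

lemma comp_append:
  "comp G \<delta> q x u n1 q1 x1 \<Longrightarrow> comp G \<delta> q1 x1 v n2 q2 x2 \<Longrightarrow> comp G \<delta> q x (u@v) (n1+n2) q2 x2"
  by (induction rule: comp.induct) (auto intro: comp.intros)

lemma comp_split:
  "comp G \<delta> q x w n q' x' \<Longrightarrow> w = u @ v \<Longrightarrow>
   \<exists>n1 n2 qm xm. n = n1 + n2 \<and> comp G \<delta> q x u n1 qm xm \<and> comp G \<delta> qm xm v n2 q' x'"
proof (induction arbitrary: u rule: comp.induct)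
  case (stop q x)
  then show ?case by (auto intro: comp.stop)
next
  case (eps q1 m q x w n q' x')
  then obtain n1 n2 qm xm where "n = n1 + n2" "comp G \<delta> q1 (x \<otimes>\<^bsub>G\<^esub> m) u n1 qm xm"
    "comp G \<delta> qm xm v n2 q' x'" by blast
  then show ?case using eps(1)
    apply (rule_tac x="Suc n1" in exI, rule_tac x=n2 in exI, rule_tac x=qm in exI, rule_tac x=xm in exI)
    by (auto intro: comp.eps)
next
  case (read q1 m q a x w n q' x')
  show ?case
  proof (cases u)
    case Nil
    then show ?thesis using read(1,2) read(4)
      apply (rule_tac x=0 in exI, rule_tac x="Suc n" in exI, rule_tac x=q in exI, rule_tac x=x in exI)
      by (auto intro: comp.intros)
  next
    case (Cons b u')
    then have "w = u' @ v" "a = b" using read(4) by auto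
    then obtain n1 n2 qm xm where "n = n1 + n2" "comp G \<delta> q1 (x \<otimes>\<^bsub>G\<^esub> m) u' n1 qm xm"
      "comp G \<delta> qm xm v n2 q' x'" using read(3) by blast
    then show ?thesis using read(1) Cons \<open>a = b\<close>
      apply (rule_tac x="Suc n1" in exI, rule_tac x=n2 in exI, rule_tac x=qm in exI, rule_tac x=xm in exI)
      by (auto intro: comp.read)
  qed
qed

lemma comp_states:
  assumes "G_automaton G Q \<Sigma> \<delta> q0 Qa"
  shows "comp G \<delta> q x w n q' x' \<Longrightarrow> q \<in> Q \<Longrightarrow> q' \<in> Q"
proof (induction rule: comp.induct)
  case (eps q1 m q x w n q' x')
  then show ?case using assms unfolding G_automaton_def by blast
next
  case (read q1 m q a x w n q' x')
  then show ?case using assms unfolding G_automaton_def by blast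
qed auto

lemma comp_reg:
  assumes grp: "group G" and XG: "X \<subseteq> carrier G"
    and lab: "\<And>q s q1 m. (q1, m) \<in> \<delta> q s \<Longrightarrow> m \<in> bs G X K"
  shows "comp G \<delta> q x w n q' x' \<Longrightarrow> x \<in> carrier G \<Longrightarrow> \<exists>z \<in> bs G X (K*n). x' = x \<otimes>\<^bsub>G\<^esub> z"
proof (induction rule: comp.induct)
  case (stop q x)
  have "\<one>\<^bsub>G\<^esub> \<in> bs G X 0" unfolding bs_def by (intro CollectI exI[of _ "[]"]) auto
  then show ?case using stop grp by (intro bexI[of _ "\<one>\<^bsub>G\<^esub>"]) (auto simp: group.is_monoid monoid.r_one)
next
  case (eps q1 m q x w n q' x')
  have m: "m \<in> bs G X K" using lab eps(1) by blast
  have mc: "m \<in> carrier G" using m bs_carrier[OF grp XG] by blast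
  obtain z where z: "z \<in> bs G X (K*n)" "x' = (x \<otimes>\<^bsub>G\<^esub> m) \<otimes>\<^bsub>G\<^esub> z"
    using eps grp mc by (auto simp: group.is_monoid monoid.m_closed)
  have zc: "z \<in> carrier G" using z bs_carrier[OF grp XG] by blast
  have "m \<otimes>\<^bsub>G\<^esub> z \<in> bs G X (K + K*n)" using bs_mult[OF grp XG m z(1)] .
  moreover have "x' = x \<otimes>\<^bsub>G\<^esub> (m \<otimes>\<^bsub>G\<^esub> z)" using z(2) eps(4) mc zc grp
    by (simp add: group.is_monoid monoid.m_assoc)
  ultimately show ?case by auto
next
  case (read q1 m q a x w n q' x')
  have m: "m \<in> bs G X K" using lab read(1) by blast
  have mc: "m \<in> carrier G" using m bs_carrier[OF grp XG] by blast
  obtain z where z: "z \<in> bs G X (K*n)" "x' = (x \<otimes>\<^bsub>G\<^esub> m) \<otimes>\<^bsub>G\<^esub> z"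
    using read grp mc by (auto simp: group.is_monoid monoid.m_closed)
  have zc: "z \<in> carrier G" using z bs_carrier[OF grp XG] by blast
  have "m \<otimes>\<^bsub>G\<^esub> z \<in> bs G X (K + K*n)" using bs_mult[OF grp XG m z(1)] .
  moreover have "x' = x \<otimes>\<^bsub>G\<^esub> (m \<otimes>\<^bsub>G\<^esub> z)" using z(2) read(4) mc zc grp
    by (simp add: group.is_monoid monoid.m_assoc)
  ultimately show ?case by auto
qed

section \<open>The H-automaton\<close>

definition dH :: "('h,'d) monoid_scheme \<Rightarrow> 'h list \<Rightarrow> nat \<Rightarrow> nat option \<Rightarrow> (nat \<times> 'h) set" where
  "dH H ys q s = (case s of None \<Rightarrow> {} | Some i \<Rightarrow>
     if q = 0 \<and> i < length ys then {(0, ys!i)}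
     else if q = 0 \<and> i = length ys then {(1, \<one>\<^bsub>H\<^esub>)}
     else if q = 1 \<and> i < length ys then {(1, inv\<^bsub>H\<^esub> (ys!i))} else {})"

definition evL :: "('h,'d) monoid_scheme \<Rightarrow> 'h list \<Rightarrow> nat list \<Rightarrow> 'h" where
  "evL H ys l = eval_word H (map ((!) ys) l)"

definition ivL :: "('h,'d) monoid_scheme \<Rightarrow> 'h list \<Rightarrow> nat list \<Rightarrow> 'h" where
  "ivL H ys l = eval_word H (map (\<lambda>i. inv\<^bsub>H\<^esub> (ys!i)) l)"

context
  fixes H :: "('h,'d) monoid_scheme" and ys :: "'h list"
  assumes grp: "group H" and ysc: "set ys \<subseteq> carrier H"
begin

lemma ys_nth_c: "i < length ys \<Longrightarrow> ys!i \<in> carrier H"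
  using ysc nth_mem by blast

lemma ys_inv_c: "i < length ys \<Longrightarrow> inv\<^bsub>H\<^esub> (ys!i) \<in> carrier H"
  by (rule group.inv_closed[OF grp ys_nth_c])

lemma evL_c: "\<forall>i\<in>set l. i < length ys \<Longrightarrow> evL H ys l \<in> carrier H"
  unfolding evL_def using ys_nth_c by (intro eval_word_closed[OF group.is_monoid[OF grp]]) auto

lemma ivL_c: "\<forall>i\<in>set l. i < length ys \<Longrightarrow> ivL H ys l \<in> carrier H"
  unfolding ivL_def using ys_inv_c by (intro eval_word_closed[OF group.is_monoid[OF grp]]) auto

lemma evL_Cons: "evL H ys (a # l) = ys!a \<otimes>\<^bsub>H\<^esub> evL H ys l"
  by (simp add: evL_def)

lemma ivL_Cons: "ivL H ys (a # l) = inv\<^bsub>H\<^esub> (ys!a) \<otimes>\<^bsub>H\<^esub> ivL H ys l"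
  by (simp add: ivL_def)

lemma ivL_rev: "\<forall>i\<in>set l. i < length ys \<Longrightarrow> ivL H ys (rev l) = inv\<^bsub>H\<^esub> (evL H ys l)"
proof (induction l)
  case Nil
  then show ?case using grp by (simp add: ivL_def evL_def monoid.inv_one[OF group.is_monoid[OF grp]])
next
  case (Cons a l)
  have c1: "set (map (\<lambda>i. inv\<^bsub>H\<^esub> (ys!i)) (rev l)) \<subseteq> carrier H" using Cons(2) ys_inv_c by auto
  have c2: "set (map (\<lambda>i. inv\<^bsub>H\<^esub> (ys!i)) [a]) \<subseteq> carrier H" using Cons(2) ys_inv_c by auto
  have "ivL H ys (rev (a # l)) = ivL H ys (rev l) \<otimes>\<^bsub>H\<^esub> (inv\<^bsub>H\<^esub> (ys!a) \<otimes>\<^bsub>H\<^esub> \<one>\<^bsub>H\<^esub>)"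
    unfolding ivL_def using eval_word_append[OF group.is_monoid[OF grp] c1 c2] by simp
  also have "\<dots> = inv\<^bsub>H\<^esub> (evL H ys l) \<otimes>\<^bsub>H\<^esub> inv\<^bsub>H\<^esub> (ys!a)"
    using Cons ys_inv_c grp by (simp add: group.is_monoid monoid.r_one)
  also have "\<dots> = inv\<^bsub>H\<^esub> (ys!a \<otimes>\<^bsub>H\<^esub> evL H ys l)"
    using Cons(2) ys_nth_c evL_c grp by (simp add: group.inv_mult_group)
  finally show ?case by (simp add: evL_Cons)
qed

lemma dH1:
  "comp H (dH H ys) q x v n q' x' \<Longrightarrow> q = 1 \<Longrightarrow> x \<in> carrier H \<Longrightarrow> \<forall>i\<in>set v. i < length ys
   \<Longrightarrow> q' = 1 \<and> x' = x \<otimes>\<^bsub>H\<^esub> ivL H ys v"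
proof (induction rule: comp.induct)
  case (stop q x)
  then show ?case using grp by (simp add: ivL_def group.is_monoid monoid.r_one)
next
  case (eps q1 m q x w n q' x')
  then show ?case by (simp add: dH_def)
next
  case (read q1 m q a x w n q' x')
  have a: "a < length ys" using read by auto
  have qm: "q1 = 1" "m = inv\<^bsub>H\<^esub> (ys!a)" using read(1) read(4) a by (auto simp: dH_def)
  have "x \<otimes>\<^bsub>H\<^esub> m \<in> carrier H" using qm read(5) ys_inv_c a grp by (simp add: group.is_monoid monoid.m_closed)
  then have "q' = 1 \<and> x' = (x \<otimes>\<^bsub>H\<^esub> m) \<otimes>\<^bsub>H\<^esub> ivL H ys w" using read qm by auto
  then show ?case using qm read(5,6) ys_inv_c a ivL_c grp
    by (simp add: ivL_Cons group.is_monoid monoid.m_assoc)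
qed

lemma dH0:
  "comp H (dH H ys) q x w n q' x' \<Longrightarrow> q = 0 \<Longrightarrow> w = l @ length ys # v \<Longrightarrow> x \<in> carrier H
   \<Longrightarrow> \<forall>i\<in>set l. i < length ys \<Longrightarrow> \<forall>i\<in>set v. i < length ys
   \<Longrightarrow> x' = x \<otimes>\<^bsub>H\<^esub> evL H ys l \<otimes>\<^bsub>H\<^esub> ivL H ys v"
proof (induction arbitrary: l rule: comp.induct)
  case (stop q x)
  then show ?case by simp
next
  case (eps q1 m q x w n q' x')
  then show ?case by (simp add: dH_def)
next
  case (read q1 m q a x w n q' x')
  show ?case
  proof (cases l)
    case Nil
    then have aw: "a = length ys" "w = v" using read by auto
    then have qm: "q1 = 1" "m = \<one>\<^bsub>H\<^esub>" using read(1) read(4) by (auto simp: dH_def)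
    have "x \<otimes>\<^bsub>H\<^esub> m = x" using qm read(6) grp by (simp add: group.is_monoid monoid.r_one)
    then have "x' = x \<otimes>\<^bsub>H\<^esub> ivL H ys v" using dH1[of q1 "x \<otimes>\<^bsub>H\<^esub> m" w n q' x'] read(2) qm aw read(6,8) by auto
    then show ?thesis using Nil read(6) grp by (simp add: evL_def group.is_monoid monoid.r_one)
  next
    case (Cons b l')
    then have aw: "a = b" "w = l' @ length ys # v" using read by auto
    have b: "b < length ys" using read(7) Cons by auto
    then have qm: "q1 = 0" "m = ys!b" using read(1) read(4) aw by (auto simp: dH_def)
    have xm: "x \<otimes>\<^bsub>H\<^esub> m \<in> carrier H" using qm read(6) ys_nth_c b grp by (simp add: group.is_monoid monoid.m_closed)
    have "x' = (x \<otimes>\<^bsub>H\<^esub> m) \<otimes>\<^bsub>H\<^esub> evL H ys l' \<otimes>\<^bsub>H\<^esub> ivL H ys v"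
      using read(3)[OF qm(1) aw(2) xm] read(7,8) Cons by auto
    then show ?thesis using Cons qm xm read(6,7,8) ys_nth_c b evL_c ivL_c grp
      by (simp add: evL_Cons group.is_monoid monoid.m_assoc)
  qed
qed

lemma dH1':
  "x \<in> carrier H \<Longrightarrow> \<forall>i\<in>set v. i < length ys \<Longrightarrow>
   comp H (dH H ys) 1 x v (length v) 1 (x \<otimes>\<^bsub>H\<^esub> ivL H ys v)"
proof (induction v arbitrary: x)
  case Nil
  then show ?case using grp comp.stop[of H "dH H ys" 1 x]
    by (simp add: ivL_def group.is_monoid monoid.r_one)
next
  case (Cons a v)
  have a: "a < length ys" using Cons by auto
  have tr: "(1, inv\<^bsub>H\<^esub> (ys!a)) \<in> dH H ys 1 (Some a)" using a by (simp add: dH_def)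
  have xm: "x \<otimes>\<^bsub>H\<^esub> inv\<^bsub>H\<^esub> (ys!a) \<in> carrier H" using Cons(2) ys_inv_c a grp by (simp add: group.is_monoid monoid.m_closed)
  have eq: "x \<otimes>\<^bsub>H\<^esub> inv\<^bsub>H\<^esub> (ys!a) \<otimes>\<^bsub>H\<^esub> ivL H ys v = x \<otimes>\<^bsub>H\<^esub> ivL H ys (a # v)"
    using Cons(2,3) ys_inv_c a ivL_c grp by (simp add: ivL_Cons group.is_monoid monoid.m_assoc)
  show ?case using comp.read[OF tr Cons(1)[OF xm]] Cons(3) eq by simp
qed

lemma dH0':
  "x \<in> carrier H \<Longrightarrow> \<forall>i\<in>set l. i < length ys \<Longrightarrow> \<forall>i\<in>set v. i < length ys \<Longrightarrow>
   comp H (dH H ys) 0 x (l @ length ys # v) (length l + Suc (length v)) 1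
     (x \<otimes>\<^bsub>H\<^esub> evL H ys l \<otimes>\<^bsub>H\<^esub> ivL H ys v)"
proof (induction l arbitrary: x)
  case Nil
  have tr: "(1, \<one>\<^bsub>H\<^esub>) \<in> dH H ys 0 (Some (length ys))" by (simp add: dH_def)
  have "x \<otimes>\<^bsub>H\<^esub> \<one>\<^bsub>H\<^esub> = x" "x \<otimes>\<^bsub>H\<^esub> evL H ys [] = x"
    using Nil grp by (simp_all add: evL_def group.is_monoid monoid.r_one)
  then have "comp H (dH H ys) 1 (x \<otimes>\<^bsub>H\<^esub> \<one>\<^bsub>H\<^esub>) v (length v) 1 (x \<otimes>\<^bsub>H\<^esub> ivL H ys v)"
    using dH1'[OF Nil(1) Nil(3)] by simp
  then have "comp H (dH H ys) 0 x (length ys # v) (Suc (length v)) 1 (x \<otimes>\<^bsub>H\<^esub> ivL H ys v)"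
    by (rule comp.read[where \<delta>="dH H ys" and q=0 and a="length ys", OF tr])
  then show ?case using \<open>x \<otimes>\<^bsub>H\<^esub> evL H ys [] = x\<close> by simp
next
  case (Cons a l)
  have a: "a < length ys" using Cons by auto
  have tr: "(0, ys!a) \<in> dH H ys 0 (Some a)" using a by (simp add: dH_def)
  have xm: "x \<otimes>\<^bsub>H\<^esub> ys!a \<in> carrier H" using Cons(2) ys_nth_c a grp by (simp add: group.is_monoid monoid.m_closed)
  have eq: "x \<otimes>\<^bsub>H\<^esub> ys!a \<otimes>\<^bsub>H\<^esub> evL H ys l \<otimes>\<^bsub>H\<^esub> ivL H ys v = x \<otimes>\<^bsub>H\<^esub> evL H ys (a # l) \<otimes>\<^bsub>H\<^esub> ivL H ys v"
    using Cons(2,3,4) ys_nth_c a evL_c ivL_c grp by (simp add: evL_Cons group.is_monoid monoid.m_assoc)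
  show ?case using comp.read[OF tr Cons(1)[OF xm]] Cons(3,4) eq by simp
qed

end


lemma grp_eq_of_inv:
  assumes "group G" "h \<in> carrier G" "h' \<in> carrier G" "\<one>\<^bsub>G\<^esub> = h \<otimes>\<^bsub>G\<^esub> inv\<^bsub>G\<^esub> h'"
  shows "h = h'"
proof -
  have "inv\<^bsub>G\<^esub> (inv\<^bsub>G\<^esub> h') = h"
    using group.inv_equality[OF assms(1) assms(4)[symmetric]] assms by (simp add: group.inv_closed)
  then show ?thesis using assms by (simp add: group.inv_inv)
qed

theorem theorem4p4:
  fixes G :: "('g,'c) monoid_scheme" and H :: "('h,'d) monoid_scheme" and p :: "real poly"
  assumes "group G" and "group H"
    and "\<exists>X. fin_gen_set G X \<and> polynomial_growth (growth G X)"
    and "\<exists>Y. fin_gen_set H Y \<and> exponential_growth (growth H Y)"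
  shows "\<not> (LG H \<subseteq> LGw G (\<lambda>n. poly p (real n)))"
proof
  assume sub: "LG H \<subseteq> LGw G (\<lambda>n. poly p (real n))"
  obtain X where X: "fin_gen_set G X" and pg: "polynomial_growth (growth G X)" using assms(3) by blast
  obtain Y where Y: "fin_gen_set H Y" and eg: "exponential_growth (growth H Y)" using assms(4) by blast
  obtain C d where Cd: "\<And>n. real (growth G X n) \<le> C * (real n + 1)^d"
    using pg unfolding polynomial_growth_def by blast
  obtain c a where ca: "c > 0" "a > 1" "\<And>n. c * a^n \<le> real (growth H Y n)"
    using eg unfolding exponential_growth_def by blast
  have XG: "finite X" "X \<subseteq> carrier G" "generate G X = carrier G" using X unfolding fin_gen_set_def by auto
  have YH: "finite Y" "Y \<subseteq> carrier H" using Y unfolding fin_gen_set_def by auto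
  obtain ys where ys: "set ys = Y \<union> m_inv H ` Y"
    using finite_list[of "Y \<union> m_inv H ` Y"] YH(1) by blast
  have ysc: "set ys \<subseteq> carrier H" using ys gen_carrier[OF assms(2) YH(2)] by simp
  define k where "k = length ys"
  have nc: "\<And>i. i < k \<Longrightarrow> ys!i \<in> carrier H" using ys_nth_c[OF assms(2) ysc] k_def by blast
  have ic: "\<And>i. i < k \<Longrightarrow> inv\<^bsub>H\<^esub> (ys!i) \<in> carrier H" using ys_inv_c[OF assms(2) ysc] k_def by blast
  have oc: "\<one>\<^bsub>H\<^esub> \<in> carrier H" using assms(2) by (simp add: group.is_monoid monoid.one_closed)
  define L where "L = aut_lang H (dH H ys) 0 {1}"
  have autH: "G_automaton H {0,1} {0..k} (dH H ys) 0 {1}"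
    unfolding G_automaton_def dH_def using nc ic oc k_def
    by (auto split: option.splits if_splits)
  have "L \<in> LG H" unfolding LG_def L_def using autH by blast
  then have "L \<in> LGw G (\<lambda>n. poly p (real n))" using sub by blast
  then obtain Q \<Sigma> \<delta> q0 Qa where aut: "G_automaton G Q \<Sigma> \<delta> q0 Qa" and LGd: "L = aut_lang G \<delta> q0 Qa"
    and tb: "\<forall>w\<in>L. \<exists>n. real n \<le> poly p (real (length w)) \<and> accepts_in G \<delta> q0 Qa w n"
    unfolding LGw_def by blast
  have Qf: "finite Q" "q0 \<in> Q" using aut unfolding G_automaton_def by auto
  define Lab where "Lab = (\<Union>q\<in>Q. \<Union>s\<in>insert None (Some ` \<Sigma>). snd ` \<delta> q s)"
  have Labf: "finite Lab" using aut unfolding Lab_def G_automaton_def by auto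
  have "\<forall>m\<in>Lab. \<exists>N. m \<in> bs G X N"
  proof
    fix m assume "m \<in> Lab"
    then have "m \<in> carrier G" using aut unfolding Lab_def G_automaton_def by force
    then show "\<exists>N. m \<in> bs G X N" using generate_bs[OF assms(1) XG(2)] XG(3) by blast
  qed
  then obtain f where f: "\<And>m. m \<in> Lab \<Longrightarrow> m \<in> bs G X (f m)" by metis
  define K where "K = sum f Lab"
  have lab: "\<And>q s q1 m. (q1, m) \<in> \<delta> q s \<Longrightarrow> m \<in> bs G X K"
  proof -
    fix q s q1 m assume tr: "(q1, m) \<in> \<delta> q s"
    then have qs: "q \<in> Q \<and> (case s of None \<Rightarrow> True | Some a \<Rightarrow> a \<in> \<Sigma>)"
      using aut unfolding G_automaton_def by blast
    then have "s \<in> insert None (Some ` \<Sigma>)" by (cases s) auto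
    then have mL: "m \<in> Lab" using tr qs unfolding Lab_def by force
    have "f m \<le> K" unfolding K_def using Labf mL by (intro member_le_sum) auto
    then show "m \<in> bs G X K" using f[OF mL] bs_mono[of "f m" K G X] by blast
  qed
  obtain A e where Ae: "A \<ge> 0" "\<And>x. x \<ge> 0 \<Longrightarrow> poly p x \<le> A*(x+1)^e" using poly_bound[of p] by blast
  have C0: "C \<ge> 0" using Cd[of 0] by simp
  have main: "c * a^n \<le> real (card Q) * (C * (real K * (A * (2*real n+2)^e) + 1)^d)" for n
  proof -
    define S where "S = bs H Y n"
    define M where "M = nat \<lfloor>A * (2*real n+2)^e\<rfloor>"
    have "\<forall>h\<in>S. \<exists>l. (\<forall>i\<in>set l. i<k) \<and> length l \<le> n \<and> evL H ys l = h"
    proof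
      fix h assume "h \<in> S"
      then obtain ws where ws: "length ws \<le> n" "set ws \<subseteq> set ys" "h = eval_word H ws"
        unfolding S_def bs_def ys by blast
      have "\<forall>y\<in>set ys. \<exists>i. i < k \<and> ys!i = y" unfolding k_def by (metis in_set_conv_nth)
      then obtain idx where idx: "\<And>y. y \<in> set ys \<Longrightarrow> idx y < k \<and> ys!(idx y) = y" by metis
      have "map ((!) ys \<circ> idx) ws = ws" by (rule map_idI) (use idx ws(2) in auto)
      then show "\<exists>l. (\<forall>i\<in>set l. i<k) \<and> length l \<le> n \<and> evL H ys l = h"
        using idx ws by (intro exI[of _ "map idx ws"]) (auto simp: evL_def)
    qed
    then obtain lw where lw: "\<And>h. h \<in> S \<Longrightarrow> (\<forall>i\<in>set (lw h). i<k) \<and> length (lw h) \<le> n \<and> evL H ys (lw h) = h"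
      by metis
    define P where "P h cf \<longleftrightarrow> cf \<in> Q \<times> bs G X (K*M) \<and>
       (\<exists>n1. comp G \<delta> q0 \<one>\<^bsub>G\<^esub> (lw h @ [k]) n1 (fst cf) (snd cf)) \<and>
       (\<exists>n2 qf. qf \<in> Qa \<and> comp G \<delta> (fst cf) (snd cf) (rev (lw h)) n2 qf \<one>\<^bsub>G\<^esub>)" for h cf
    have "\<forall>h\<in>S. \<exists>cf. P h cf"
    proof
      fix h assume hS: "h \<in> S"
      note lwh = lw[OF hS]
      define w where "w = lw h @ k # rev (lw h)"
      have rv: "\<forall>i\<in>set (rev (lw h)). i < length ys" using lwh k_def by simp
      have l1: "\<forall>i\<in>set (lw h). i < length ys" using lwh k_def by simp
      have "comp H (dH H ys) 0 \<one>\<^bsub>H\<^esub> w (length (lw h) + Suc (length (rev (lw h)))) 1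
          (\<one>\<^bsub>H\<^esub> \<otimes>\<^bsub>H\<^esub> evL H ys (lw h) \<otimes>\<^bsub>H\<^esub> ivL H ys (rev (lw h)))"
        unfolding w_def k_def using dH0'[OF assms(2) ysc oc l1 rv] .
      moreover have "\<one>\<^bsub>H\<^esub> \<otimes>\<^bsub>H\<^esub> evL H ys (lw h) \<otimes>\<^bsub>H\<^esub> ivL H ys (rev (lw h)) = \<one>\<^bsub>H\<^esub>"
        using ivL_rev[OF assms(2) ysc l1] evL_c[OF assms(2) ysc l1] assms(2)
        by (simp add: group.is_monoid monoid.l_one group.r_inv)
      ultimately have "w \<in> L" unfolding L_def aut_lang_def accepts_in_def by auto
      then obtain m where m: "real m \<le> poly p (real (length w))" and acc: "accepts_in G \<delta> q0 Qa w m"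
        using tb by blast
      then obtain qf where qf: "qf \<in> Qa" "comp G \<delta> q0 \<one>\<^bsub>G\<^esub> w m qf \<one>\<^bsub>G\<^esub>"
        unfolding accepts_in_def by blast
      have "w = (lw h @ [k]) @ rev (lw h)" unfolding w_def by simp
      from comp_split[OF qf(2) this] obtain n1 n2 qm xm where sp: "m = n1+n2"
        "comp G \<delta> q0 \<one>\<^bsub>G\<^esub> (lw h @ [k]) n1 qm xm" "comp G \<delta> qm xm (rev (lw h)) n2 qf \<one>\<^bsub>G\<^esub>"
        by blast
      have qmQ: "qm \<in> Q" using comp_states[OF aut sp(2) Qf(2)] .
      have ocG: "\<one>\<^bsub>G\<^esub> \<in> carrier G" using assms(1) by (simp add: group.is_monoid monoid.one_closed)
      have "\<exists>z\<in>bs G X (K*n1). xm = \<one>\<^bsub>G\<^esub> \<otimes>\<^bsub>G\<^esub> z"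
      proof (rule comp_reg[OF assms(1) XG(2)])
        fix q s q1 m assume "(q1, m) \<in> \<delta> q s"
        then show "m \<in> bs G X K" by (rule lab)
      next
        show "comp G \<delta> q0 \<one>\<^bsub>G\<^esub> (lw h @ [k]) n1 qm xm" by (rule sp(2))
      qed (rule ocG)
      then obtain z where z: "z \<in> bs G X (K*n1)" "xm = \<one>\<^bsub>G\<^esub> \<otimes>\<^bsub>G\<^esub> z" by blast
      have zc: "z \<in> carrier G" using z bs_carrier[OF assms(1) XG(2)] by blast
      have xz: "xm = z" using z zc assms(1) by (simp add: group.is_monoid monoid.l_one)
      have lenw: "length w \<le> 2*n+1" using lwh unfolding w_def by simp
      have "real m \<le> A * (real (length w) + 1)^e" using m Ae(2)[of "real (length w)"] by simp
      also have "\<dots> \<le> A * (2*real n+2)^e" using Ae(1) lenw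
        by (intro mult_left_mono power_mono) auto
      finally have "m \<le> M" unfolding M_def by (rule le_nat_floor)
      then have "K*n1 \<le> K*M" using sp(1) by simp
      then have "xm \<in> bs G X (K*M)" using z(1) bs_mono[of "K*n1" "K*M" G X] xz by blast
      then show "\<exists>cf. P h cf" unfolding P_def using qmQ sp qf(1) by (intro exI[of _ "(qm, xm)"]) auto
    qed
    then obtain F where F: "\<And>h. h \<in> S \<Longrightarrow> P h (F h)" by metis
    have inj: "inj_on F S"
    proof (rule inj_onI)
      fix h h' assume hS: "h \<in> S" "h' \<in> S" and eq: "F h = F h'"
      from F[OF hS(1)] obtain n1 where c1: "comp G \<delta> q0 \<one>\<^bsub>G\<^esub> (lw h @ [k]) n1 (fst (F h)) (snd (F h))"
        unfolding P_def by blast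
      from F[OF hS(2)] obtain n2 qf where qf: "qf \<in> Qa"
        "comp G \<delta> (fst (F h)) (snd (F h)) (rev (lw h')) n2 qf \<one>\<^bsub>G\<^esub>"
        unfolding P_def eq by blast
      have "comp G \<delta> q0 \<one>\<^bsub>G\<^esub> ((lw h @ [k]) @ rev (lw h')) (n1+n2) qf \<one>\<^bsub>G\<^esub>"
        by (rule comp_append[OF c1 qf(2)])
      then have "lw h @ k # rev (lw h') \<in> L" unfolding LGd aut_lang_def accepts_in_def using qf(1) by auto
      then obtain nn q' where hc: "q' \<in> {1}" "comp H (dH H ys) 0 \<one>\<^bsub>H\<^esub> (lw h @ k # rev (lw h')) nn q' \<one>\<^bsub>H\<^esub>"
        unfolding L_def aut_lang_def accepts_in_def by blast
      have l1: "\<forall>i\<in>set (lw h). i < length ys" using lw[OF hS(1)] k_def by simp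
      have l2: "\<forall>i\<in>set (lw h'). i < length ys" using lw[OF hS(2)] k_def by simp
      have rv: "\<forall>i\<in>set (rev (lw h')). i < length ys" using l2 by simp
      have "\<one>\<^bsub>H\<^esub> = \<one>\<^bsub>H\<^esub> \<otimes>\<^bsub>H\<^esub> evL H ys (lw h) \<otimes>\<^bsub>H\<^esub> ivL H ys (rev (lw h'))"
        using dH0[OF assms(2) ysc hc(2) refl _ oc l1 rv] k_def by simp
      also have "\<dots> = h \<otimes>\<^bsub>H\<^esub> inv\<^bsub>H\<^esub> h'"
        using ivL_rev[OF assms(2) ysc l2] evL_c[OF assms(2) ysc l1] lw[OF hS(1)] lw[OF hS(2)] assms(2)
        by (simp add: group.is_monoid monoid.l_one)
      finally show "h = h'"
        using grp_eq_of_inv[OF assms(2)] evL_c[OF assms(2) ysc l1] evL_c[OF assms(2) ysc l2]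
          lw[OF hS(1)] lw[OF hS(2)] by metis
    qed
    have finB: "finite (Q \<times> bs G X (K*M))" by (rule finite_cartesian_product[OF Qf(1) bs_finite[OF XG(1)]])
    have "F ` S \<subseteq> Q \<times> bs G X (K*M)" using F unfolding P_def by blast
    then have "card S \<le> card (Q \<times> bs G X (K*M))" using card_inj_on_le[OF inj _ finB] by blast
    also have "\<dots> = card Q * growth G X (K*M)" by (simp add: card_cartesian_product growth_bs)
    finally have "card S \<le> card Q * growth G X (K*M)" .
    then have cS: "real (growth H Y n) \<le> real (card Q) * real (growth G X (K*M))"
      unfolding S_def growth_bs by (metis of_nat_le_iff of_nat_mult)
    have Mb: "real M \<le> A * (2*real n+2)^e"
      unfolding M_def using Ae(1) by simp
    have "real (growth G X (K*M)) \<le> C * (real (K*M)+1)^d" by (rule Cd)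
    also have "\<dots> \<le> C * (real K * (A * (2*real n+2)^e) + 1)^d"
      using C0 Mb by (intro mult_left_mono power_mono) (auto intro: mult_left_mono)
    finally have "real (growth G X (K*M)) \<le> C * (real K * (A * (2*real n+2)^e) + 1)^d" .
    then have "real (card Q) * real (growth G X (K*M)) \<le> real (card Q) * (C * (real K * (A * (2*real n+2)^e) + 1)^d)"
      by (intro mult_left_mono) auto
    then show ?thesis using cS ca(3)[of n] by linarith
  qed
  define B where "B = real K * A * 2^e + 1"
  have B1: "B \<ge> 1" unfolding B_def using Ae(1) by simp
  have bound: "c * a^n \<le> (real (card Q) * C * B^d) * (real n+1)^(e*d)" for n
  proof -
    have n1: "(real n + 1)^e \<ge> 1" by simp
    have "real K * (A * (2*real n+2)^e) + 1 = real K * A * 2^e * (real n+1)^e + 1"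
    proof -
      have "(2*real n+2)^e = 2^e * (real n+1)^e" by (simp add: power_mult_distrib[symmetric] algebra_simps)
      then show ?thesis by simp
    qed
    also have "\<dots> \<le> B * (real n+1)^e" unfolding B_def using n1 by (simp add: algebra_simps)
    finally have "(real K * (A * (2*real n+2)^e) + 1)^d \<le> (B * (real n+1)^e)^d"
      using Ae(1) by (intro power_mono) auto
    also have "\<dots> = B^d * (real n+1)^(e*d)" by (simp add: power_mult_distrib power_mult)
    finally have "real (card Q) * (C * (real K * (A * (2*real n+2)^e) + 1)^d) \<le> real (card Q) * (C * (B^d * (real n+1)^(e*d)))"
      using C0 by (intro mult_left_mono) auto
    then show ?thesis using main[of n] by (simp add: algebra_simps)
  qed
  obtain n where "(real (card Q) * C * B^d) * (real n + 1)^(e*d) < c * a^n"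
    using poly_exp_exists[OF ca(2) ca(1)] by blast
  then show False using bound[of n] by linarith
qed

end
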